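(* Let $(X,\tau_1,\tau_2)$ be a bitopological space, $i,j\in\{1,2\}$, $i\neq j$, which is $(i,j)$-almost regular, $(i,j)_1$-nearly paralindelöf, an $(i,j)$-$P_r$-space, a $(j,i)$-$P$-space and a $j$-$P$-space. Then for every cover $\mathcal U$ of $X$ by $(i,j)$-regular open sets there is a cover $\mathcal M$ of $X$ by $i$-open sets such that for every $p\in X$ the star $\mathrm{St}(p,\mathcal M)=\bigcup\{M\in\mathcal M:p\in M\}$ is contained in some member of $\mathcal U$.
   Context: $(X,\tau_1,\tau_2)$ is a bitopological space and $i,j\in\{1,2\}$, $i\neq j$. For $k\in\{1,2\}$ and $A\subseteq X$, $k\text{-}\mathrm{int}(A)$ and $k\text{-}\mathrm{cl}(A)$ denote interior and closure with respect to $\tau_k$; "$k$-open"/"$k$-closed" mean $\tau_k$-open/$\tau_k$-closed. A set $A$ is $(i,j)$-regular open if $A=i\text{-}\mathrm{int}(j\text{-}\mathrm{cl}(A))$. A family $\mathcal V$ refines a family $\mathcal U$ if every member of $\mathcal V$ is contained in some member of $\mathcal U$; a family is a cover of $X$ if its union is $X$. A family $\mathcal V$ is $k$-locally countable if every $x\in X$ has a $k$-open neighbourhood meeting at most countably many members of $\mathcal V$. $X$ is a $k$-$P$-space if every intersection of countably many $k$-open sets is $k$-open. $X$ is a $(j,i)$-$P$-space if every intersection of countably many (possibly just one) $j$-open sets is $i$-open. $X$ is an $(i,j)$-$P_r$-space if every intersection of countably many $(i,j)$-regular open sets is $(i,j)$-regular open. $X$ is $(i,j)$-almost regular if for each $x\in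 X$ and each $(i,j)$-regular open set $U$ containing $x$ there is an $(i,j)$-regular open set $V$ with $x\in V\subseteq j\text{-}\mathrm{cl}(V)\subseteq U$. $X$ is $(i,j)_1$-nearly paralindelöf if every cover of $X$ by $(i,j)$-regular open sets has a refinement which is a cover of $X$ by $i$-open sets and which is $j$-locally countable. *)

theory Defs
  imports "HOL-Analysis.Analysis"
begin

text \<open>Since the pair (i,j) is an
  arbitrary ordered pair of distinct indices, we state everything for an ordered pair
  (Ti, Tj) of topologies.\<close>

definition bt_space :: "'a topology \<Rightarrow> 'a topology \<Rightarrow> bool" where
  "bt_space Ti Tj \<longleftrightarrow> topspace Ti = topspace Tj"

definition ij_regular_open :: "'a topology \<Rightarrow> 'a topology \<Rightarrow> 'a set \<Rightarrow> bool" where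
  "ij_regular_open Ti Tj A \<longleftrightarrow> A = Ti interior_of (Tj closure_of A)"

definition refines :: "'a set set \<Rightarrow> 'a set set \<Rightarrow> bool" where
  "refines \<V> \<U> \<longleftrightarrow> (\<forall>V\<in>\<V>. \<exists>U\<in>\<U>. V \<subseteq> U)"

definition is_cover :: "'a set \<Rightarrow> 'a set set \<Rightarrow> bool" where
  "is_cover X \<U> \<longleftrightarrow> \<Union>\<U> = X"

definition locally_countable :: "'a topology \<Rightarrow> 'a set set \<Rightarrow> bool" where
  "locally_countable T \<V> \<longleftrightarrow>
     (\<forall>x\<in>topspace T. \<exists>W. openin T W \<and> x \<in> W \<and> countable {V\<in>\<V>. V \<inter> W \<noteq> {}})"

definition P_space :: "'a topology \<Rightarrow> bool" where
  "P_space T \<longleftrightarrow> (\<forall>\<F>. countable \<F> \<and> \<F> \<noteq> {} \<and> (\<forall>F\<in>\<F>. openin T F) \<longrightarrow> openin T (\<Inter>\<F>))"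

definition ji_P_space :: "'a topology \<Rightarrow> 'a topology \<Rightarrow> bool" where
  "ji_P_space Tj Ti \<longleftrightarrow> (\<forall>\<F>. countable \<F> \<and> \<F> \<noteq> {} \<and> (\<forall>F\<in>\<F>. openin Tj F) \<longrightarrow> openin Ti (\<Inter>\<F>))"

definition ij_Pr_space :: "'a topology \<Rightarrow> 'a topology \<Rightarrow> bool" where
  "ij_Pr_space Ti Tj \<longleftrightarrow> (\<forall>\<F>. countable \<F> \<and> \<F> \<noteq> {} \<and> (\<forall>F\<in>\<F>. ij_regular_open Ti Tj F)
      \<longrightarrow> ij_regular_open Ti Tj (\<Inter>\<F>))"

definition ij_almost_regular :: "'a topology \<Rightarrow> 'a topology \<Rightarrow> bool" where
  "ij_almost_regular Ti Tj \<longleftrightarrow>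
     (\<forall>x\<in>topspace Ti. \<forall>U. ij_regular_open Ti Tj U \<and> x \<in> U \<longrightarrow>
        (\<exists>V. ij_regular_open Ti Tj V \<and> x \<in> V \<and> V \<subseteq> Tj closure_of V \<and> Tj closure_of V \<subseteq> U))"

definition ij1_nearly_paralindelof :: "'a topology \<Rightarrow> 'a topology \<Rightarrow> bool" where
  "ij1_nearly_paralindelof Ti Tj \<longleftrightarrow>
     (\<forall>\<U>. is_cover (topspace Ti) \<U> \<and> (\<forall>U\<in>\<U>. ij_regular_open Ti Tj U) \<longrightarrow>
        (\<exists>\<V>. refines \<V> \<U> \<and> is_cover (topspace Ti) \<V> \<and> (\<forall>V\<in>\<V>. openin Ti V)
              \<and> locally_countable Tj \<V>))"

definition star :: "'a \<Rightarrow> 'a set set \<Rightarrow> 'a set" where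
  "star p \<M> = \<Union>{M\<in>\<M>. p \<in> M}"

end

theory Submission
  imports Defs
begin

theorem mainTheorem5:
  fixes Ti Tj :: "'a topology"
  assumes "bt_space Ti Tj"
    and "ij_almost_regular Ti Tj"
    and "ij1_nearly_paralindelof Ti Tj"
    and "ij_Pr_space Ti Tj"
    and "ji_P_space Tj Ti"
    and "P_space Tj"
    and "is_cover (topspace Ti) \<U>"
    and "\<forall>U\<in>\<U>. ij_regular_open Ti Tj U"
  shows "\<exists>\<M>. is_cover (topspace Ti) \<M> \<and> (\<forall>M\<in>\<M>. openin Ti M) \<and>
           (\<forall>p\<in>topspace Ti. \<exists>U\<in>\<U>. star p \<M> \<subseteq> U)"
proof -
  have ts: "topspace Ti = topspace Tj" using assms(1) by (simp add: bt_space_def)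
  define \<U>' where "\<U>' = {V. ij_regular_open Ti Tj V \<and> (\<exists>U\<in>\<U>. Tj closure_of V \<subseteq> U)}"
  have cov': "is_cover (topspace Ti) \<U>'"
    unfolding is_cover_def
  proof (rule set_eqI, rule iffI)
    fix x assume "x \<in> \<Union>\<U>'"
    then obtain V where "V \<in> \<U>'" "x \<in> V" by auto
    then have "V = Ti interior_of (Tj closure_of V)" by (simp add: \<U>'_def ij_regular_open_def)
    then show "x \<in> topspace Ti" using \<open>x \<in> V\<close> interior_of_subset_topspace by (metis subsetD)
  next
    fix x assume x: "x \<in> topspace Ti"
    then obtain U where U: "U \<in> \<U>" "x \<in> U" using assms(7) by (auto simp: is_cover_def)
    then obtain V where "ij_regular_open Ti Tj V" "x \<in> V" "Tj closure_of V \<subseteq> U"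
      using assms(2,8) x unfolding ij_almost_regular_def by blast
    then show "x \<in> \<Union>\<U>'" using U unfolding \<U>'_def by blast
  qed
  have reg': "\<forall>U\<in>\<U>'. ij_regular_open Ti Tj U" by (simp add: \<U>'_def)
  have ex: "\<exists>\<V>. refines \<V> \<U>' \<and> is_cover (topspace Ti) \<V> \<and> (\<forall>V\<in>\<V>. openin Ti V)
              \<and> locally_countable Tj \<V>"
    using assms(3)[unfolded ij1_nearly_paralindelof_def, rule_format, OF conjI[OF cov' reg']] .
  then obtain \<V> where V: "refines \<V> \<U>'" "is_cover (topspace Ti) \<V>"
      "\<forall>V\<in>\<V>. openin Ti V" "locally_countable Tj \<V>"
    by (elim exE conjE)
  have gex: "\<exists>U. U \<in> \<U> \<and> Tj closure_of V \<subseteq> U" if "V \<in> \<V>" for V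
  proof -
    have "\<exists>V'\<in>\<U>'. V \<subseteq> V'" using V(1) that unfolding Defs.refines_def by (rule bspec)
    then obtain V' where "V' \<in> \<U>'" "V \<subseteq> V'" by (rule bexE)
    then obtain U where "U \<in> \<U>" "Tj closure_of V' \<subseteq> U" by (auto simp: \<U>'_def)
    then show ?thesis using closure_of_mono[OF \<open>V \<subseteq> V'\<close>, of Tj] by blast
  qed
  define g where "g V = (SOME U. U \<in> \<U> \<and> Tj closure_of V \<subseteq> U)" for V
  have g: "g V \<in> \<U>" "Tj closure_of V \<subseteq> g V" if "V \<in> \<V>" for V
    using someI_ex[OF gex[OF that]] unfolding g_def by auto
  have wex: "\<exists>W. openin Tj W \<and> x \<in> W \<and> countable {V\<in>\<V>. V \<inter> W \<noteq> {}}" if "x \<in> topspace Tj" for x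
    using V(4) that unfolding locally_countable_def by blast
  define W where "W x = (SOME W. openin Tj W \<and> x \<in> W \<and> countable {V\<in>\<V>. V \<inter> W \<noteq> {}})" for x
  have W: "openin Tj (W x)" "x \<in> W x" "countable {V\<in>\<V>. V \<inter> W x \<noteq> {}}" if "x \<in> topspace Tj" for x
    using someI_ex[OF wex[OF that]] unfolding W_def by auto
  define C where "C x = {V\<in>\<V>. V \<inter> W x \<noteq> {}}" for x
  define A where "A x = \<Inter> (insert (W x) ((\<lambda>V. topspace Tj - Tj closure_of V) ` {V\<in>C x. x \<notin> Tj closure_of V}))" for x
  define B where "B x = \<Inter> (insert (topspace Ti) (g ` {V\<in>C x. x \<in> Tj closure_of V}))" for x
  define \<M> where "\<M> = (\<lambda>x. A x \<inter> B x) ` topspace Ti"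
  have Aopen: "openin Ti (A x)" if x: "x \<in> topspace Ti" for x
  proof -
    have cnt: "countable (C x)" using W(3) x ts by (simp add: C_def)
    let ?F = "insert (W x) ((\<lambda>V. topspace Tj - Tj closure_of V) ` {V\<in>C x. x \<notin> Tj closure_of V})"
    have c2: "countable ?F" using cnt by auto
    have o2: "\<forall>F\<in>?F. openin Tj F" using W(1) x ts by auto
    have "openin Tj (A x)" unfolding A_def using assms(6) c2 o2 unfolding P_space_def by blast
    moreover have "\<Inter>{A x} = A x" by simp
    ultimately show ?thesis using assms(5) unfolding ji_P_space_def
      by (metis countable_insert countable_empty insert_not_empty singletonD)
  qed
  have topreg: "ij_regular_open Ti Tj (topspace Ti)"
    unfolding ij_regular_open_def using ts by (metis closure_of_topspace interior_of_topspace)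
  have Bopen: "openin Ti (B x)" if x: "x \<in> topspace Ti" for x
  proof -
    have cnt: "countable (C x)" using W(3) x ts by (simp add: C_def)
    let ?F = "insert (topspace Ti) (g ` {V\<in>C x. x \<in> Tj closure_of V})"
    have c2: "countable ?F" using cnt by auto
    have o2: "\<forall>F\<in>?F. ij_regular_open Ti Tj F" using topreg assms(8) g by (auto simp: C_def)
    have "ij_regular_open Ti Tj (B x)" unfolding B_def using assms(4) c2 o2 unfolding ij_Pr_space_def by blast
    then show ?thesis unfolding ij_regular_open_def by (metis openin_interior_of)
  qed
  have xin: "x \<in> A x \<inter> B x" if x: "x \<in> topspace Ti" for x
    using W(2) x ts g(2) by (auto simp: A_def B_def C_def)
  have Asub: "A x \<subseteq> topspace Ti" if x: "x \<in> topspace Ti" for x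
    using W(1) x ts openin_subset unfolding A_def by fastforce
  have "is_cover (topspace Ti) \<M>"
    unfolding is_cover_def \<M>_def using xin Asub by blast
  moreover have "\<forall>M\<in>\<M>. openin Ti M" using Aopen Bopen by (auto simp: \<M>_def)
  moreover have "\<forall>p\<in>topspace Ti. \<exists>U\<in>\<U>. star p \<M> \<subseteq> U"
  proof
    fix p assume p: "p \<in> topspace Ti"
    then obtain V0 where V0: "V0 \<in> \<V>" "p \<in> V0" using V(2) p unfolding Defs.is_cover_def by blast
    have V0c: "p \<in> Tj closure_of V0"
    proof -
      have "openin Ti V0" using V0(1) V(3) by blast
      then have "V0 \<subseteq> topspace Tj" using ts openin_subset by metis
      then show ?thesis using closure_of_subset V0(2) by (metis subsetD)
    qed
    have "star p \<M> \<subseteq> g V0"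
    proof
      fix y assume "y \<in> star p \<M>"
      then obtain x where x: "x \<in> topspace Ti" "p \<in> A x \<inter> B x" "y \<in> A x \<inter> B x"
        by (auto simp: star_def \<M>_def)
      have "p \<in> W x" using x(2) by (simp add: A_def)
      then have C0: "V0 \<in> C x" using V0 by (auto simp: C_def)
      have "x \<in> Tj closure_of V0"
      proof (rule ccontr)
        assume "x \<notin> Tj closure_of V0"
        then have "A x \<subseteq> topspace Tj - Tj closure_of V0" using C0 unfolding A_def by blast
        then show False using x(2) V0c by blast
      qed
      then have "B x \<subseteq> g V0" using C0 unfolding B_def by blast
      then show "y \<in> g V0" using x(3) by blast
    qed
    then show "\<exists>U\<in>\<U>. star p \<M> \<subseteq> U" using g(1)[OF V0(1)] by blast
  qed
  ultimately show ?thesis by blast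
qed

end
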